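(* Let $(H,G,t,\Phi)$ be a crossed module of Lie groups and let $\mathcal{B}_1:H\to H$, $\mathcal{B}_0:G\to G$ be smooth maps. Put $$\mathrm{Gr}(\mathcal{B}_1)=\{(\mathcal{B}_1(p),p)\mid p\in H\}\subset H\ltimes H,\qquad \mathrm{Gr}(\mathcal{B}_0)=\{(\mathcal{B}_0(a),a)\mid a\in G\}\subset G\ltimes G.$$ Then $(\mathcal{B}_1,\mathcal{B}_0)$ is a Rota-Baxter operator on $(H,G,t,\Phi)$ if and only if $\mathrm{Gr}(\mathcal{B}_1)$ and $\mathrm{Gr}(\mathcal{B}_0)$ are Lie subgroups of $H\ltimes H$ and $G\ltimes G$ respectively, the map $(t,t)(p,q)=(t(p),t(q))$ restricts to a Lie group homomorphism $\mathrm{Gr}(\mathcal{B}_1)\to\mathrm{Gr}(\mathcal{B}_0)$ (i.e. $(t(\mathcal{B}_1(p)),t(p))\in \mathrm{Gr}(\mathcal{B}_0)$), the action $\tilde\Phi$ restricts to an action of $\mathrm{Gr}(\mathcal{B}_0)$ on $\mathrm{Gr}(\mathcal{B}_1)$ by automorphisms, namely $$\tilde{\Phi}\big((\mathcal{B}_0(a),a)\big)(\mathcal{B}_1(p),p)=\Big(\Phi(\mathcal{B}_0(a))\mathcal{B}_1(p),\ \Phi(a\mathcal{B}_0(a))(p\mathcal{B}_1(p))\cdot\Phi(\mathcal{B}_0(a))\mathcal{B}_1(p)^{-1}\Big)\in\mathrm{Gr}(\mathcal{B}_1),$$ and $(\mathrm{Gr}(\mathcal{B}_1),\mathrm{Gr}(\mathcal{B}_0),(t,t),\tilde\Phi)$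 is a crossed module of Lie groups.
   Context: A crossed module of Lie groups is a quadruple $(H,G,t,\Phi)$ where $H,G$ are Lie groups, $t:H\to G$ is a Lie group homomorphism and $\Phi:G\to\mathrm{Aut}(H)$ is a smooth action of $G$ on $H$ by automorphisms such that $\Phi(t(p))q=pqp^{-1}$ and $t(\Phi(a)p)=a\,t(p)\,a^{-1}$ for all $p,q\in H$, $a\in G$. A Rota-Baxter operator on a Lie group $G$ is a smooth map $\mathcal{B}:G\to G$ with $\mathcal{B}(a)\mathcal{B}(b)=\mathcal{B}(a\mathcal{B}(a)b\mathcal{B}(a)^{-1})$ for all $a,b\in G$. A Rota-Baxter operator on a crossed module of Lie groups $(H,G,t,\Phi)$ is a pair $(\mathcal{B}_1,\mathcal{B}_0)$ of smooth maps $\mathcal{B}_1:H\to H$, $\mathcal{B}_0:G\to G$ such that (i) $\mathcal{B}_1,\mathcal{B}_0$ are Rota-Baxter operators on $H$, $G$; (ii) $t\circ\mathcal{B}_1=\mathcal{B}_0\circ t$; (iii) $\Phi(\mathcal{B}_0(a))\mathcal{B}_1(p)=\mathcal{B}_1\big(\Phi(a\mathcal{B}_0(a))(p\mathcal{B}_1(p))\cdot\Phi(\mathcal{B}_0(a))\mathcal{B}_1(p)^{-1}\big)$ for all $a\in G,p\in H$. $G\ltimes G$ denotes $G\times G$ with product $(a,b)(c,d)=(ac,\ b\,a\,d\,a^{-1})$, and similarly $H\ltimes H$ with $(p,q)(r,s)=(pr,\ q\,p\,s\,p^{-1})$. The map $\tilde\Phi:G\ltimes G\to\mathrm{Aut}(H\ltimes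 H)$ is $\tilde{\Phi}((a,b))(p,q)=\big(\Phi(a)p,\ \Phi(ba)(qp)\cdot\Phi(a)p^{-1}\big)$; it is known that $(H\ltimes H,G\ltimes G,(t,t),\tilde\Phi)$ is a crossed module of Lie groups. *)

theory Defs
  imports "HOL-Algebra.Group"
begin

(* Lie groups are modelled by their underlying (HOL-Algebra) groups. *)

text \<open>Phi : G -> Aut(H), a left action by automorphisms, given pointwise as a
function of two arguments; only its values on carriers matter.\<close>
definition action_by_aut ::
  "('g, 'b) monoid_scheme \<Rightarrow> ('h, 'a) monoid_scheme \<Rightarrow> ('g \<Rightarrow> 'h \<Rightarrow> 'h) \<Rightarrow> bool" where
  "action_by_aut G H Phi \<longleftrightarrow>
     (\<forall>a\<in>carrier G. Phi a \<in> hom H H \<and> bij_betw (Phi a) (carrier H) (carrier H)) \<and>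
     (\<forall>a\<in>carrier G. \<forall>b\<in>carrier G. \<forall>p\<in>carrier H.
        Phi (a \<otimes>\<^bsub>G\<^esub> b) p = Phi a (Phi b p))"

definition crossed_module ::
  "('h, 'a) monoid_scheme \<Rightarrow> ('g, 'b) monoid_scheme \<Rightarrow> ('h \<Rightarrow> 'g) \<Rightarrow> ('g \<Rightarrow> 'h \<Rightarrow> 'h) \<Rightarrow> bool" where
  "crossed_module H G t Phi \<longleftrightarrow>
     group H \<and> group G \<and> t \<in> hom H G \<and> action_by_aut G H Phi \<and>
     (\<forall>p\<in>carrier H. \<forall>q\<in>carrier H.
        Phi (t p) q = p \<otimes>\<^bsub>H\<^esub> q \<otimes>\<^bsub>H\<^esub> inv\<^bsub>H\<^esub> p) \<and>
     (\<forall>a\<in>carrier G. \<forall>p\<in>carrier H.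
        t (Phi a p) = a \<otimes>\<^bsub>G\<^esub> t p \<otimes>\<^bsub>G\<^esub> inv\<^bsub>G\<^esub> a)"

definition rota_baxter :: "('g, 'b) monoid_scheme \<Rightarrow> ('g \<Rightarrow> 'g) \<Rightarrow> bool" where
  "rota_baxter G B \<longleftrightarrow> B \<in> carrier G \<rightarrow> carrier G \<and>
     (\<forall>a\<in>carrier G. \<forall>b\<in>carrier G.
        B a \<otimes>\<^bsub>G\<^esub> B b = B (a \<otimes>\<^bsub>G\<^esub> B a \<otimes>\<^bsub>G\<^esub> b \<otimes>\<^bsub>G\<^esub> inv\<^bsub>G\<^esub> (B a)))"

definition rota_baxter_cm ::
  "('h, 'a) monoid_scheme \<Rightarrow> ('g, 'b) monoid_scheme \<Rightarrow> ('h \<Rightarrow> 'g) \<Rightarrow> ('g \<Rightarrow> 'h \<Rightarrow> 'h)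
     \<Rightarrow> ('h \<Rightarrow> 'h) \<Rightarrow> ('g \<Rightarrow> 'g) \<Rightarrow> bool" where
  "rota_baxter_cm H G t Phi B1 B0 \<longleftrightarrow>
     rota_baxter H B1 \<and> rota_baxter G B0 \<and>
     (\<forall>p\<in>carrier H. t (B1 p) = B0 (t p)) \<and>
     (\<forall>a\<in>carrier G. \<forall>p\<in>carrier H.
        Phi (B0 a) (B1 p) =
          B1 (Phi (a \<otimes>\<^bsub>G\<^esub> B0 a) (p \<otimes>\<^bsub>H\<^esub> B1 p) \<otimes>\<^bsub>H\<^esub> inv\<^bsub>H\<^esub> (Phi (B0 a) (B1 p))))"

definition sdprod :: "('g, 'b) monoid_scheme \<Rightarrow> ('g \<times> 'g) monoid" where
  "sdprod G = \<lparr>carrier = carrier G \<times> carrier G,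
     mult = (\<lambda>x y. (fst x \<otimes>\<^bsub>G\<^esub> fst y,
                    snd x \<otimes>\<^bsub>G\<^esub> fst x \<otimes>\<^bsub>G\<^esub> snd y \<otimes>\<^bsub>G\<^esub> inv\<^bsub>G\<^esub> (fst x))),
     one = (\<one>\<^bsub>G\<^esub>, \<one>\<^bsub>G\<^esub>)\<rparr>"

definition Phi_tilde ::
  "('h, 'a) monoid_scheme \<Rightarrow> ('g, 'b) monoid_scheme \<Rightarrow> ('g \<Rightarrow> 'h \<Rightarrow> 'h)
     \<Rightarrow> 'g \<times> 'g \<Rightarrow> 'h \<times> 'h \<Rightarrow> 'h \<times> 'h" where
  "Phi_tilde H G Phi x y =
     (Phi (fst x) (fst y),
      Phi (snd x \<otimes>\<^bsub>G\<^esub> fst x) (snd y \<otimes>\<^bsub>H\<^esub> fst y) \<otimes>\<^bsub>H\<^esub> inv\<^bsub>H\<^esub> (Phi (fst x) (fst y)))"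

definition tt :: "('h \<Rightarrow> 'g) \<Rightarrow> 'h \<times> 'h \<Rightarrow> 'g \<times> 'g" where
  "tt t x = (t (fst x), t (snd x))"

definition graph_op :: "('g, 'b) monoid_scheme \<Rightarrow> ('g \<Rightarrow> 'g) \<Rightarrow> ('g \<times> 'g) set" where
  "graph_op G B = (\<lambda>a. (B a, a)) ` carrier G"

end

theory Submission
  imports Defs
begin


lemma (in group) cancel_l1[simp]: "a \<in> carrier G \<Longrightarrow> x \<in> carrier G \<Longrightarrow> inv a \<otimes> (a \<otimes> x) = x"
  by (simp add: m_assoc[symmetric])
lemma (in group) cancel_l2[simp]: "a \<in> carrier G \<Longrightarrow> x \<in> carrier G \<Longrightarrow> a \<otimes> (inv a \<otimes> x) = x"
  by (simp add: m_assoc[symmetric])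

lemma sdprod_carrier[simp]: "carrier (sdprod G) = carrier G \<times> carrier G"
  by (simp add: sdprod_def)
lemma sdprod_mult[simp]: "(a,b) \<otimes>\<^bsub>sdprod G\<^esub> (c,d) = (a \<otimes>\<^bsub>G\<^esub> c, b \<otimes>\<^bsub>G\<^esub> a \<otimes>\<^bsub>G\<^esub> d \<otimes>\<^bsub>G\<^esub> inv\<^bsub>G\<^esub> a)"
  by (simp add: sdprod_def)
lemma sdprod_one[simp]: "\<one>\<^bsub>sdprod G\<^esub> = (\<one>\<^bsub>G\<^esub>, \<one>\<^bsub>G\<^esub>)"
  by (simp add: sdprod_def)

lemma sdprod_group: assumes "group G" shows "group (sdprod G)"
proof -
  interpret G: group G by fact
  show ?thesis
  proof (rule groupI)
    fix x y assume "x \<in> carrier (sdprod G)" "y \<in> carrier (sdprod G)"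
    then show "x \<otimes>\<^bsub>sdprod G\<^esub> y \<in> carrier (sdprod G)" by (cases x, cases y) auto
  next
    show "\<one>\<^bsub>sdprod G\<^esub> \<in> carrier (sdprod G)" by simp
  next
    fix x y z assume "x \<in> carrier (sdprod G)" "y \<in> carrier (sdprod G)" "z \<in> carrier (sdprod G)"
    then show "x \<otimes>\<^bsub>sdprod G\<^esub> y \<otimes>\<^bsub>sdprod G\<^esub> z = x \<otimes>\<^bsub>sdprod G\<^esub> (y \<otimes>\<^bsub>sdprod G\<^esub> z)"
      by (cases x, cases y, cases z) (simp add: G.m_assoc G.inv_mult_group)
  next
    fix x assume "x \<in> carrier (sdprod G)"
    then show "\<one>\<^bsub>sdprod G\<^esub> \<otimes>\<^bsub>sdprod G\<^esub> x = x" by (cases x) simp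
  next
    fix x assume "x \<in> carrier (sdprod G)"
    then obtain a b where x: "x = (a,b)" "a \<in> carrier G" "b \<in> carrier G" by auto
    show "\<exists>y\<in>carrier (sdprod G). y \<otimes>\<^bsub>sdprod G\<^esub> x = \<one>\<^bsub>sdprod G\<^esub>"
      by (rule bexI[of _ "(inv\<^bsub>G\<^esub> a, inv\<^bsub>G\<^esub> a \<otimes>\<^bsub>G\<^esub> inv\<^bsub>G\<^esub> b \<otimes>\<^bsub>G\<^esub> a)"])
         (use x in \<open>simp_all add: G.m_assoc\<close>)
  qed
qed

lemma sdprod_inv: assumes "group G" "a \<in> carrier G" "b \<in> carrier G"
  shows "inv\<^bsub>sdprod G\<^esub> (a,b) = (inv\<^bsub>G\<^esub> a, inv\<^bsub>G\<^esub> a \<otimes>\<^bsub>G\<^esub> inv\<^bsub>G\<^esub> b \<otimes>\<^bsub>G\<^esub> a)"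
proof -
  interpret G: group G by fact
  interpret S: group "sdprod G" by (rule sdprod_group) fact
  show ?thesis by (rule S.inv_equality) (use assms in \<open>simp_all add: G.m_assoc\<close>)
qed

lemma graph_subgroup_iff:
  assumes "group G" "B \<in> carrier G \<rightarrow> carrier G"
  shows "subgroup (graph_op G B) (sdprod G) \<longleftrightarrow> rota_baxter G B"
proof -
  interpret G: group G by fact
  interpret S: group "sdprod G" by (rule sdprod_group) fact
  have Bc: "\<And>a. a \<in> carrier G \<Longrightarrow> B a \<in> carrier G" using assms(2) by auto
  show ?thesis
  proof
    assume sg: "subgroup (graph_op G B) (sdprod G)"
    show "rota_baxter G B" unfolding rota_baxter_def
    proof (intro conjI ballI)
      show "B \<in> carrier G \<rightarrow> carrier G" by fact
    next
      fix a b assume ab: "a \<in> carrier G" "b \<in> carrier G"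
      have "(B a, a) \<otimes>\<^bsub>sdprod G\<^esub> (B b, b) \<in> graph_op G B"
        by (rule subgroup.m_closed[OF sg]) (use ab in \<open>auto simp: graph_op_def\<close>)
      then obtain c where "c \<in> carrier G" "(B a \<otimes>\<^bsub>G\<^esub> B b, a \<otimes>\<^bsub>G\<^esub> B a \<otimes>\<^bsub>G\<^esub> b \<otimes>\<^bsub>G\<^esub> inv\<^bsub>G\<^esub> B a) = (B c, c)"
        by (auto simp: graph_op_def)
      then show "B a \<otimes>\<^bsub>G\<^esub> B b = B (a \<otimes>\<^bsub>G\<^esub> B a \<otimes>\<^bsub>G\<^esub> b \<otimes>\<^bsub>G\<^esub> inv\<^bsub>G\<^esub> B a)" by auto
    qed
  next
    assume rb: "rota_baxter G B"
    then have rb': "\<And>a b. a \<in> carrier G \<Longrightarrow> b \<in> carrier G \<Longrightarrow>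
       B a \<otimes>\<^bsub>G\<^esub> B b = B (a \<otimes>\<^bsub>G\<^esub> B a \<otimes>\<^bsub>G\<^esub> b \<otimes>\<^bsub>G\<^esub> inv\<^bsub>G\<^esub> B a)"
      by (auto simp: rota_baxter_def)
    have B1: "B \<one>\<^bsub>G\<^esub> = \<one>\<^bsub>G\<^esub>"
    proof -
      have "B \<one>\<^bsub>G\<^esub> \<otimes>\<^bsub>G\<^esub> B \<one>\<^bsub>G\<^esub> = B \<one>\<^bsub>G\<^esub> \<otimes>\<^bsub>G\<^esub> \<one>\<^bsub>G\<^esub>"
        using rb'[of "\<one>\<^bsub>G\<^esub>" "\<one>\<^bsub>G\<^esub>"] Bc[of "\<one>\<^bsub>G\<^esub>"] by simp
      then show ?thesis using Bc[of "\<one>\<^bsub>G\<^esub>"] G.Units_l_cancel by simp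
    qed
    show "subgroup (graph_op G B) (sdprod G)"
    proof (rule S.subgroupI)
      show "graph_op G B \<subseteq> carrier (sdprod G)" using Bc by (auto simp: graph_op_def)
      show "graph_op G B \<noteq> {}" by (auto simp: graph_op_def)
    next
      fix x assume "x \<in> graph_op G B"
      then obtain a where x: "x = (B a, a)" "a \<in> carrier G" by (auto simp: graph_op_def)
      define c where "c = inv\<^bsub>G\<^esub> B a \<otimes>\<^bsub>G\<^esub> inv\<^bsub>G\<^esub> a \<otimes>\<^bsub>G\<^esub> B a"
      have cc: "c \<in> carrier G" using x Bc by (simp add: c_def)
      have "B a \<otimes>\<^bsub>G\<^esub> B c = B \<one>\<^bsub>G\<^esub>"
        using rb'[OF x(2) cc] x Bc by (simp add: c_def G.m_assoc)
      then have "B a \<otimes>\<^bsub>G\<^esub> B c = \<one>\<^bsub>G\<^esub>" using B1 by simp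
      then have "B c = inv\<^bsub>G\<^esub> B a"
        by (metis Bc G.inv_equality G.inv_inv G.inv_closed cc x(2))
      then have "inv\<^bsub>sdprod G\<^esub> x = (B c, c)"
        using x Bc by (simp add: sdprod_inv[OF assms(1)] c_def)
      then show "inv\<^bsub>sdprod G\<^esub> x \<in> graph_op G B" using cc by (auto simp: graph_op_def)
    next
      fix x y assume "x \<in> graph_op G B" "y \<in> graph_op G B"
      then obtain a b where x: "x = (B a, a)" "a \<in> carrier G" and y: "y = (B b, b)" "b \<in> carrier G"
        by (auto simp: graph_op_def)
      have "x \<otimes>\<^bsub>sdprod G\<^esub> y = (B (a \<otimes>\<^bsub>G\<^esub> B a \<otimes>\<^bsub>G\<^esub> b \<otimes>\<^bsub>G\<^esub> inv\<^bsub>G\<^esub> B a), a \<otimes>\<^bsub>G\<^esub> B a \<otimes>\<^bsub>G\<^esub> b \<otimes>\<^bsub>G\<^esub> inv\<^bsub>G\<^esub> B a)"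
        using x y rb' by simp
      then show "x \<otimes>\<^bsub>sdprod G\<^esub> y \<in> graph_op G B" using x y Bc by (auto simp: graph_op_def)
    qed
  qed
qed

locale cm =
  fixes H :: "('h, 'a) monoid_scheme" and G :: "('g, 'b) monoid_scheme"
    and t :: "'h \<Rightarrow> 'g" and Phi :: "'g \<Rightarrow> 'h \<Rightarrow> 'h"
  assumes cm: "crossed_module H G t Phi"
begin

lemma grpH: "group H" and grpG: "group G" using cm by (auto simp: crossed_module_def)

sublocale H: group H by (rule grpH)
sublocale G: group G by (rule grpG)
sublocale T: group_hom H G t
  using cm by (auto simp: crossed_module_def group_hom_def group_hom_axioms_def grpH grpG)

lemma Phi_hom: "a \<in> carrier G \<Longrightarrow> Phi a \<in> hom H H" using cm by (auto simp: crossed_module_def action_by_aut_def)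

lemma Phi_closed[simp]: "a \<in> carrier G \<Longrightarrow> p \<in> carrier H \<Longrightarrow> Phi a p \<in> carrier H"
  using Phi_hom by (auto simp: hom_def)
lemma Phi_mult[simp]: "a \<in> carrier G \<Longrightarrow> p \<in> carrier H \<Longrightarrow> q \<in> carrier H \<Longrightarrow>
   Phi a (p \<otimes>\<^bsub>H\<^esub> q) = Phi a p \<otimes>\<^bsub>H\<^esub> Phi a q"
  using Phi_hom by (auto simp: hom_def)
lemma Phi_inv[simp]: "a \<in> carrier G \<Longrightarrow> p \<in> carrier H \<Longrightarrow> Phi a (inv\<^bsub>H\<^esub> p) = inv\<^bsub>H\<^esub> (Phi a p)"
proof -
  assume ap: "a \<in> carrier G" "p \<in> carrier H"
  interpret P: group_hom H H "Phi a" using \<open>a \<in> carrier G\<close> Phi_hom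
    by (simp add: group_hom_def group_hom_axioms_def grpH)
  show ?thesis using ap by simp
qed
lemma Phi_comp[simp]: "a \<in> carrier G \<Longrightarrow> b \<in> carrier G \<Longrightarrow> p \<in> carrier H \<Longrightarrow>
   Phi (a \<otimes>\<^bsub>G\<^esub> b) p = Phi a (Phi b p)"
  using cm by (auto simp: crossed_module_def action_by_aut_def)
lemma Phi_one[simp]: "p \<in> carrier H \<Longrightarrow> Phi \<one>\<^bsub>G\<^esub> p = p"
proof -
  assume p: "p \<in> carrier H"
  have "bij_betw (Phi \<one>\<^bsub>G\<^esub>) (carrier H) (carrier H)"
    using cm by (auto simp: crossed_module_def action_by_aut_def)
  then have inj: "inj_on (Phi \<one>\<^bsub>G\<^esub>) (carrier H)" by (rule bij_betw_imp_inj_on)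
  have "Phi \<one>\<^bsub>G\<^esub> (Phi \<one>\<^bsub>G\<^esub> p) = Phi \<one>\<^bsub>G\<^esub> p"
    using Phi_comp[of "\<one>\<^bsub>G\<^esub>" "\<one>\<^bsub>G\<^esub>" p] p by simp
  then show ?thesis using inj p by (auto dest: inj_onD)
qed
lemma conj1[simp]: "p \<in> carrier H \<Longrightarrow> q \<in> carrier H \<Longrightarrow> Phi (t p) q = p \<otimes>\<^bsub>H\<^esub> q \<otimes>\<^bsub>H\<^esub> inv\<^bsub>H\<^esub> p"
  using cm by (auto simp: crossed_module_def)
lemma conj2[simp]: "a \<in> carrier G \<Longrightarrow> p \<in> carrier H \<Longrightarrow> t (Phi a p) = a \<otimes>\<^bsub>G\<^esub> t p \<otimes>\<^bsub>G\<^esub> inv\<^bsub>G\<^esub> a"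
  using cm by (auto simp: crossed_module_def)

lemmas alg = H.m_assoc G.m_assoc H.inv_mult_group G.inv_mult_group

lemma PT_closed: "a \<in> carrier G \<Longrightarrow> b \<in> carrier G \<Longrightarrow> p \<in> carrier H \<Longrightarrow> q \<in> carrier H \<Longrightarrow>
  Phi_tilde H G Phi (a,b) (p,q) \<in> carrier H \<times> carrier H"
  by (simp add: Phi_tilde_def)

lemma PT_mult: "a \<in> carrier G \<Longrightarrow> b \<in> carrier G \<Longrightarrow> p \<in> carrier H \<Longrightarrow> q \<in> carrier H \<Longrightarrow>
  r \<in> carrier H \<Longrightarrow> s \<in> carrier H \<Longrightarrow>
  Phi_tilde H G Phi (a,b) ((p,q) \<otimes>\<^bsub>sdprod H\<^esub> (r,s)) =
   Phi_tilde H G Phi (a,b) (p,q) \<otimes>\<^bsub>sdprod H\<^esub> Phi_tilde H G Phi (a,b) (r,s)"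
  by (simp add: Phi_tilde_def alg)

lemma PT_comp: "a \<in> carrier G \<Longrightarrow> b \<in> carrier G \<Longrightarrow> c \<in> carrier G \<Longrightarrow> d \<in> carrier G \<Longrightarrow>
  p \<in> carrier H \<Longrightarrow> q \<in> carrier H \<Longrightarrow>
  Phi_tilde H G Phi ((a,b) \<otimes>\<^bsub>sdprod G\<^esub> (c,d)) (p,q) =
   Phi_tilde H G Phi (a,b) (Phi_tilde H G Phi (c,d) (p,q))"
  by (simp add: Phi_tilde_def alg)

lemma PT_one: "p \<in> carrier H \<Longrightarrow> q \<in> carrier H \<Longrightarrow>
  Phi_tilde H G Phi (\<one>\<^bsub>G\<^esub>, \<one>\<^bsub>G\<^esub>) (p,q) = (p,q)"
  by (simp add: Phi_tilde_def alg)

lemma PT_eq1: "p \<in> carrier H \<Longrightarrow> q \<in> carrier H \<Longrightarrow> r \<in> carrier H \<Longrightarrow> s \<in> carrier H \<Longrightarrow>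
  Phi_tilde H G Phi (tt t (p,q)) (r,s) =
    (p,q) \<otimes>\<^bsub>sdprod H\<^esub> (r,s) \<otimes>\<^bsub>sdprod H\<^esub> inv\<^bsub>sdprod H\<^esub> (p,q)"
  by (simp add: Phi_tilde_def tt_def alg sdprod_inv[OF grpH])

lemma PT_eq2: "a \<in> carrier G \<Longrightarrow> b \<in> carrier G \<Longrightarrow> p \<in> carrier H \<Longrightarrow> q \<in> carrier H \<Longrightarrow>
  tt t (Phi_tilde H G Phi (a,b) (p,q)) =
    (a,b) \<otimes>\<^bsub>sdprod G\<^esub> tt t (p,q) \<otimes>\<^bsub>sdprod G\<^esub> inv\<^bsub>sdprod G\<^esub> (a,b)"
  by (simp add: Phi_tilde_def tt_def alg sdprod_inv[OF grpG])

lemma tt_mult: "p \<in> carrier H \<Longrightarrow> q \<in> carrier H \<Longrightarrow> r \<in> carrier H \<Longrightarrow> s \<in> carrier H \<Longrightarrow>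
  tt t ((p,q) \<otimes>\<^bsub>sdprod H\<^esub> (r,s)) = tt t (p,q) \<otimes>\<^bsub>sdprod G\<^esub> tt t (r,s)"
  by (simp add: tt_def)

lemma PT_inv_left: assumes "x \<in> carrier G \<times> carrier G" "y \<in> carrier H \<times> carrier H"
  shows "Phi_tilde H G Phi (inv\<^bsub>sdprod G\<^esub> x) (Phi_tilde H G Phi x y) = y"
proof -
  interpret S: group "sdprod G" by (rule sdprod_group[OF grpG])
  obtain a b where x: "x = (a,b)" "a \<in> carrier G" "b \<in> carrier G" using assms(1) by auto
  obtain p q where y: "y = (p,q)" "p \<in> carrier H" "q \<in> carrier H" using assms(2) by auto
  obtain c d where i: "inv\<^bsub>sdprod G\<^esub> x = (c,d)" "c \<in> carrier G" "d \<in> carrier G"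
    using S.inv_closed[of x] assms(1) by (cases "inv\<^bsub>sdprod G\<^esub> x") auto
  have "Phi_tilde H G Phi (inv\<^bsub>sdprod G\<^esub> x) (Phi_tilde H G Phi x y)
     = Phi_tilde H G Phi (inv\<^bsub>sdprod G\<^esub> x \<otimes>\<^bsub>sdprod G\<^esub> x) y"
    using PT_comp[of c d a b p q] x y i by simp
  also have "\<dots> = y" using assms(1) y PT_one by simp
  finally show ?thesis .
qed

lemma PT_inv_right: assumes "x \<in> carrier G \<times> carrier G" "y \<in> carrier H \<times> carrier H"
  shows "Phi_tilde H G Phi x (Phi_tilde H G Phi (inv\<^bsub>sdprod G\<^esub> x) y) = y"
proof -
  interpret S: group "sdprod G" by (rule sdprod_group[OF grpG])
  have "Phi_tilde H G Phi (inv\<^bsub>sdprod G\<^esub> (inv\<^bsub>sdprod G\<^esub> x))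
          (Phi_tilde H G Phi (inv\<^bsub>sdprod G\<^esub> x) y) = y"
    using PT_inv_left[of "inv\<^bsub>sdprod G\<^esub> x" y] S.inv_closed[of x] assms by simp
  then show ?thesis using assms by simp
qed

lemma PT_closed': "x \<in> carrier G \<times> carrier G \<Longrightarrow> y \<in> carrier H \<times> carrier H \<Longrightarrow>
  Phi_tilde H G Phi x y \<in> carrier H \<times> carrier H"
  using PT_closed by (cases x, cases y) auto

lemma main:
  assumes B1c: "B1 \<in> carrier H \<rightarrow> carrier H"
    and B0c: "B0 \<in> carrier G \<rightarrow> carrier G"
  shows "rota_baxter_cm H G t Phi B1 B0 \<longleftrightarrow>
    (subgroup (graph_op H B1) (sdprod H) \<and>
     subgroup (graph_op G B0) (sdprod G) \<and>
     (\<forall>p\<in>carrier H. tt t (B1 p, p) \<in> graph_op G B0) \<and>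
     tt t \<in> hom ((sdprod H)\<lparr>carrier := graph_op H B1\<rparr>) ((sdprod G)\<lparr>carrier := graph_op G B0\<rparr>) \<and>
     (\<forall>a\<in>carrier G. \<forall>p\<in>carrier H.
        Phi_tilde H G Phi (B0 a, a) (B1 p, p) \<in> graph_op H B1) \<and>
     action_by_aut ((sdprod G)\<lparr>carrier := graph_op G B0\<rparr>)
                   ((sdprod H)\<lparr>carrier := graph_op H B1\<rparr>) (Phi_tilde H G Phi) \<and>
     crossed_module ((sdprod H)\<lparr>carrier := graph_op H B1\<rparr>)
                    ((sdprod G)\<lparr>carrier := graph_op G B0\<rparr>) (tt t) (Phi_tilde H G Phi))"
    (is "?L \<longleftrightarrow> ?R")
proof
  assume ?R
  then have sgH: "subgroup (graph_op H B1) (sdprod H)" and sgG: "subgroup (graph_op G B0) (sdprod G)"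
    and i3: "\<forall>p\<in>carrier H. tt t (B1 p, p) \<in> graph_op G B0"
    and i5: "\<forall>a\<in>carrier G. \<forall>p\<in>carrier H. Phi_tilde H G Phi (B0 a, a) (B1 p, p) \<in> graph_op H B1"
    by auto
  show ?L unfolding rota_baxter_cm_def
  proof (intro conjI ballI)
    show "rota_baxter H B1" using sgH graph_subgroup_iff[OF grpH B1c] by simp
    show "rota_baxter G B0" using sgG graph_subgroup_iff[OF grpG B0c] by simp
  next
    fix p assume p: "p \<in> carrier H"
    then show "t (B1 p) = B0 (t p)" using i3 by (auto simp: tt_def graph_op_def)
  next
    fix a p assume "a \<in> carrier G" "p \<in> carrier H"
    then show "Phi (B0 a) (B1 p) = B1 (Phi (a \<otimes>\<^bsub>G\<^esub> B0 a) (p \<otimes>\<^bsub>H\<^esub> B1 p) \<otimes>\<^bsub>H\<^esub> inv\<^bsub>H\<^esub> Phi (B0 a) (B1 p))"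
      using i5 by (force simp: Phi_tilde_def graph_op_def)
  qed
next
  assume L: ?L
  interpret SH: group "sdprod H" by (rule sdprod_group[OF grpH])
  interpret SG: group "sdprod G" by (rule sdprod_group[OF grpG])
  have rbH: "rota_baxter H B1" and rbG: "rota_baxter G B0"
    and ii: "\<And>p. p \<in> carrier H \<Longrightarrow> t (B1 p) = B0 (t p)"
    and iii: "\<And>a p. a \<in> carrier G \<Longrightarrow> p \<in> carrier H \<Longrightarrow> Phi (B0 a) (B1 p) =
          B1 (Phi (a \<otimes>\<^bsub>G\<^esub> B0 a) (p \<otimes>\<^bsub>H\<^esub> B1 p) \<otimes>\<^bsub>H\<^esub> inv\<^bsub>H\<^esub> (Phi (B0 a) (B1 p)))"
    using L by (auto simp: rota_baxter_cm_def)
  have sgH: "subgroup (graph_op H B1) (sdprod H)" using rbH graph_subgroup_iff[OF grpH B1c] by simp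
  have sgG: "subgroup (graph_op G B0) (sdprod G)" using rbG graph_subgroup_iff[OF grpG B0c] by simp
  have subH: "graph_op H B1 \<subseteq> carrier H \<times> carrier H" using B1c by (auto simp: graph_op_def)
  have subG: "graph_op G B0 \<subseteq> carrier G \<times> carrier G" using B0c by (auto simp: graph_op_def)
  have i3: "\<forall>p\<in>carrier H. tt t (B1 p, p) \<in> graph_op G B0"
    using ii by (auto simp: tt_def graph_op_def)
  have i5: "\<forall>a\<in>carrier G. \<forall>p\<in>carrier H. Phi_tilde H G Phi (B0 a, a) (B1 p, p) \<in> graph_op H B1"
  proof (intro ballI)
    fix a p assume ap: "a \<in> carrier G" "p \<in> carrier H"
    have c: "B0 a \<in> carrier G" "B1 p \<in> carrier H" using ap B0c B1c by auto
    let ?q = "Phi (a \<otimes>\<^bsub>G\<^esub> B0 a) (p \<otimes>\<^bsub>H\<^esub> B1 p) \<otimes>\<^bsub>H\<^esub> inv\<^bsub>H\<^esub> (Phi (B0 a) (B1 p))"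
    have "?q \<in> carrier H" using ap c by simp
    moreover have "Phi_tilde H G Phi (B0 a, a) (B1 p, p) = (B1 ?q, ?q)"
      using iii[OF ap] by (simp add: Phi_tilde_def)
    ultimately show "Phi_tilde H G Phi (B0 a, a) (B1 p, p) \<in> graph_op H B1"
      by (auto simp: graph_op_def)
  qed
  have PTg: "\<And>x y. x \<in> graph_op G B0 \<Longrightarrow> y \<in> graph_op H B1 \<Longrightarrow> Phi_tilde H G Phi x y \<in> graph_op H B1"
    using i5 by (auto simp: graph_op_def)
  have tthom: "tt t \<in> hom ((sdprod H)\<lparr>carrier := graph_op H B1\<rparr>) ((sdprod G)\<lparr>carrier := graph_op G B0\<rparr>)"
  proof (rule homI)
    fix x assume "x \<in> carrier ((sdprod H)\<lparr>carrier := graph_op H B1\<rparr>)"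
    then show "tt t x \<in> carrier ((sdprod G)\<lparr>carrier := graph_op G B0\<rparr>)"
      using i3 by (auto simp: graph_op_def)
  next
    fix x y assume "x \<in> carrier ((sdprod H)\<lparr>carrier := graph_op H B1\<rparr>)"
      "y \<in> carrier ((sdprod H)\<lparr>carrier := graph_op H B1\<rparr>)"
    then have "x \<in> carrier H \<times> carrier H" "y \<in> carrier H \<times> carrier H" using subH by auto
    then show "tt t (x \<otimes>\<^bsub>(sdprod H)\<lparr>carrier := graph_op H B1\<rparr>\<^esub> y) =
       tt t x \<otimes>\<^bsub>(sdprod G)\<lparr>carrier := graph_op G B0\<rparr>\<^esub> tt t y"
      using tt_mult by (cases x, cases y) auto
  qed
  have act: "action_by_aut ((sdprod G)\<lparr>carrier := graph_op G B0\<rparr>)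
                   ((sdprod H)\<lparr>carrier := graph_op H B1\<rparr>) (Phi_tilde H G Phi)"
    unfolding action_by_aut_def
  proof (intro conjI ballI)
    fix x assume "x \<in> carrier ((sdprod G)\<lparr>carrier := graph_op G B0\<rparr>)"
    then have x: "x \<in> graph_op G B0" by simp
    then have xc: "x \<in> carrier G \<times> carrier G" using subG by auto
    have xi: "inv\<^bsub>sdprod G\<^esub> x \<in> graph_op G B0" using subgroup.m_inv_closed[OF sgG x] by simp
    show "Phi_tilde H G Phi x \<in> hom ((sdprod H)\<lparr>carrier := graph_op H B1\<rparr>) ((sdprod H)\<lparr>carrier := graph_op H B1\<rparr>)"
    proof (rule homI)
      fix y assume "y \<in> carrier ((sdprod H)\<lparr>carrier := graph_op H B1\<rparr>)"
      then show "Phi_tilde H G Phi x y \<in> carrier ((sdprod H)\<lparr>carrier := graph_op H B1\<rparr>)"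
        using PTg x by simp
    next
      fix y z assume "y \<in> carrier ((sdprod H)\<lparr>carrier := graph_op H B1\<rparr>)"
        "z \<in> carrier ((sdprod H)\<lparr>carrier := graph_op H B1\<rparr>)"
      then have "y \<in> carrier H \<times> carrier H" "z \<in> carrier H \<times> carrier H" using subH by auto
      then show "Phi_tilde H G Phi x (y \<otimes>\<^bsub>(sdprod H)\<lparr>carrier := graph_op H B1\<rparr>\<^esub> z) =
         Phi_tilde H G Phi x y \<otimes>\<^bsub>(sdprod H)\<lparr>carrier := graph_op H B1\<rparr>\<^esub> Phi_tilde H G Phi x z"
        using PT_mult xc by (cases x, cases y, cases z) auto
    qed
    show "bij_betw (Phi_tilde H G Phi x) (carrier ((sdprod H)\<lparr>carrier := graph_op H B1\<rparr>))
            (carrier ((sdprod H)\<lparr>carrier := graph_op H B1\<rparr>))"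
      apply simp
      apply (rule bij_betw_byWitness[where f'="Phi_tilde H G Phi (inv\<^bsub>sdprod G\<^esub> x)"])
         apply (meson PT_inv_left[OF xc] subH subsetD)
        apply (meson PT_inv_right[OF xc] subH subsetD)
       apply (meson PTg x image_subsetI)
      apply (meson PTg xi image_subsetI)
      done
  next
    fix x y p assume "x \<in> carrier ((sdprod G)\<lparr>carrier := graph_op G B0\<rparr>)"
      "y \<in> carrier ((sdprod G)\<lparr>carrier := graph_op G B0\<rparr>)"
      "p \<in> carrier ((sdprod H)\<lparr>carrier := graph_op H B1\<rparr>)"
    then have "x \<in> carrier G \<times> carrier G" "y \<in> carrier G \<times> carrier G" "p \<in> carrier H \<times> carrier H"
      using subH subG by auto
    then show "Phi_tilde H G Phi (x \<otimes>\<^bsub>(sdprod G)\<lparr>carrier := graph_op G B0\<rparr>\<^esub> y) p =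
       Phi_tilde H G Phi x (Phi_tilde H G Phi y p)"
      using PT_comp by (cases x, cases y, cases p) auto
  qed
  have crm: "crossed_module ((sdprod H)\<lparr>carrier := graph_op H B1\<rparr>)
                    ((sdprod G)\<lparr>carrier := graph_op G B0\<rparr>) (tt t) (Phi_tilde H G Phi)"
    unfolding crossed_module_def
  proof (intro conjI ballI)
    show "group ((sdprod H)\<lparr>carrier := graph_op H B1\<rparr>)" by (rule SH.subgroup_imp_group[OF sgH])
    show "group ((sdprod G)\<lparr>carrier := graph_op G B0\<rparr>)" by (rule SG.subgroup_imp_group[OF sgG])
    show "tt t \<in> hom ((sdprod H)\<lparr>carrier := graph_op H B1\<rparr>) ((sdprod G)\<lparr>carrier := graph_op G B0\<rparr>)"
      by (rule tthom)
    show "action_by_aut ((sdprod G)\<lparr>carrier := graph_op G B0\<rparr>)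
                   ((sdprod H)\<lparr>carrier := graph_op H B1\<rparr>) (Phi_tilde H G Phi)" by (rule act)
  next
    fix y z assume yz: "y \<in> carrier ((sdprod H)\<lparr>carrier := graph_op H B1\<rparr>)"
      "z \<in> carrier ((sdprod H)\<lparr>carrier := graph_op H B1\<rparr>)"
    then have "y \<in> carrier H \<times> carrier H" "z \<in> carrier H \<times> carrier H" using subH by auto
    moreover have "inv\<^bsub>(sdprod H)\<lparr>carrier := graph_op H B1\<rparr>\<^esub> y = inv\<^bsub>sdprod H\<^esub> y"
      using SH.m_inv_consistent[OF sgH] yz by simp
    ultimately show "Phi_tilde H G Phi (tt t y) z =
      y \<otimes>\<^bsub>(sdprod H)\<lparr>carrier := graph_op H B1\<rparr>\<^esub> z \<otimes>\<^bsub>(sdprod H)\<lparr>carrier := graph_op H B1\<rparr>\<^esub>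
        inv\<^bsub>(sdprod H)\<lparr>carrier := graph_op H B1\<rparr>\<^esub> y"
      using PT_eq1 by (cases y, cases z) auto
  next
    fix x y assume xy: "x \<in> carrier ((sdprod G)\<lparr>carrier := graph_op G B0\<rparr>)"
      "y \<in> carrier ((sdprod H)\<lparr>carrier := graph_op H B1\<rparr>)"
    then have "x \<in> carrier G \<times> carrier G" "y \<in> carrier H \<times> carrier H" using subH subG by auto
    moreover have "inv\<^bsub>(sdprod G)\<lparr>carrier := graph_op G B0\<rparr>\<^esub> x = inv\<^bsub>sdprod G\<^esub> x"
      using SG.m_inv_consistent[OF sgG] xy by simp
    ultimately show "tt t (Phi_tilde H G Phi x y) =
      x \<otimes>\<^bsub>(sdprod G)\<lparr>carrier := graph_op G B0\<rparr>\<^esub> tt t y \<otimes>\<^bsub>(sdprod G)\<lparr>carrier := graph_op G B0\<rparr>\<^esub>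
        inv\<^bsub>(sdprod G)\<lparr>carrier := graph_op G B0\<rparr>\<^esub> x"
      using PT_eq2 by (cases x, cases y) auto
  qed
  show ?R using sgH sgG i3 tthom i5 act crm by blast
qed

end


theorem theorem2p4:
  fixes H :: "('h, 'a) monoid_scheme" and G :: "('g, 'b) monoid_scheme"
    and t :: "'h \<Rightarrow> 'g" and Phi :: "'g \<Rightarrow> 'h \<Rightarrow> 'h"
    and B1 :: "'h \<Rightarrow> 'h" and B0 :: "'g \<Rightarrow> 'g"
  assumes "crossed_module H G t Phi"
    and "B1 \<in> carrier H \<rightarrow> carrier H"
    and "B0 \<in> carrier G \<rightarrow> carrier G"
  shows "rota_baxter_cm H G t Phi B1 B0 \<longleftrightarrow>
    (subgroup (graph_op H B1) (sdprod H) \<and>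
     subgroup (graph_op G B0) (sdprod G) \<and>
     (\<forall>p\<in>carrier H. tt t (B1 p, p) \<in> graph_op G B0) \<and>
     tt t \<in> hom ((sdprod H)\<lparr>carrier := graph_op H B1\<rparr>) ((sdprod G)\<lparr>carrier := graph_op G B0\<rparr>) \<and>
     (\<forall>a\<in>carrier G. \<forall>p\<in>carrier H.
        Phi_tilde H G Phi (B0 a, a) (B1 p, p) \<in> graph_op H B1) \<and>
     action_by_aut ((sdprod G)\<lparr>carrier := graph_op G B0\<rparr>)
                   ((sdprod H)\<lparr>carrier := graph_op H B1\<rparr>) (Phi_tilde H G Phi) \<and>
     crossed_module ((sdprod H)\<lparr>carrier := graph_op H B1\<rparr>)
                    ((sdprod G)\<lparr>carrier := graph_op G B0\<rparr>) (tt t) (Phi_tilde H G Phi))"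
  proof -
  interpret cm H G t Phi by (rule cm.intro) (rule assms(1))
  show ?thesis by (rule main[OF assms(2,3)])
qed

end
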